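(* Let $P,Q\subseteq\mathbb R^n$ be nonzero closed convex cones with $|\mathfrak s(P,Q)|\ne1$, and let $L$ be the smallest linear subspace of $\mathbb R^n$ containing both $P$ and $Q$. Let $\bar u$ be a solution of $\min_{u\in P\cap S_n}F_Q(u)$ such that $\mathtt{Proj}_{Q\cap S_n}(\bar u)$ is a singleton. Then $\bar u$ lies on the boundary of $P$ relative to $L$ (i.e., $\bar u$ is not an interior point of $P$ in the relative topology of $L$).
   Context: $S_n$ is the unit sphere of $\mathbb R^n$. $F_Q(u):=\max_{v\in Q\cap S_n}\langle u,v\rangle$, $\mathfrak s(P,Q):=\min_{u\in P\cap S_n}F_Q(u)$, and $\mathtt{Proj}_X(u):=\arg\min_{x\in X}\|x-u\|$. *)

theory Defs
  imports "HOL-Analysis.Analysis"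
begin

definition F_Q :: "'a::euclidean_space set \<Rightarrow> 'a \<Rightarrow> real" where
  "F_Q Q u = (SUP v \<in> Q \<inter> sphere 0 1. inner u v)"

definition s_PQ :: "'a::euclidean_space set \<Rightarrow> 'a set \<Rightarrow> real" where
  "s_PQ P Q = (INF u \<in> P \<inter> sphere 0 1. F_Q Q u)"

definition Proj :: "'a::euclidean_space set \<Rightarrow> 'a \<Rightarrow> 'a set" where
  "Proj X u = {x \<in> X. \<forall>y\<in>X. norm (x - u) \<le> norm (y - u)}"

end

theory Submission
  imports Defs
begin

lemma FQ_attained:
  fixes Q :: "'a::euclidean_space set"
  assumes "compact K" "K \<noteq> {}"
  shows "\<exists>v\<in>K. (SUP y\<in>K. inner u y) = inner u v \<and> (\<forall>y\<in>K. inner u y \<le> inner u v)"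
proof -
  have "continuous_on K (\<lambda>y. inner u y)" by (intro continuous_intros)
  then obtain v where v: "v \<in> K" "\<forall>y\<in>K. inner u y \<le> inner u v"
    using continuous_attains_sup[OF assms] by blast
  have "(SUP y\<in>K. inner u y) = inner u v"
    by (rule cSup_eq_maximum) (use v in auto)
  with v show ?thesis by blast
qed

theorem mainTheorem8:
  fixes P Q :: "'a::euclidean_space set" and ubar :: 'a
  assumes "closed P" "convex P" "cone P" "\<exists>x\<in>P. x \<noteq> 0"
      and "closed Q" "convex Q" "cone Q" "\<exists>x\<in>Q. x \<noteq> 0"
      and "\<bar>s_PQ P Q\<bar> \<noteq> 1"
      and "ubar \<in> P \<inter> sphere 0 1"
      and "\<forall>u \<in> P \<inter> sphere 0 1. F_Q Q ubar \<le> F_Q Q u"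
      and "\<exists>w. Proj (Q \<inter> sphere 0 1) ubar = {w}"
  shows "ubar \<notin> (top_of_set (span (P \<union> Q))) interior_of P"
proof
  define K where "K = Q \<inter> sphere (0::'a) 1"
  define L where "L = span (P \<union> Q)"
  assume "ubar \<in> (top_of_set (span (P \<union> Q))) interior_of P"
  then have "\<exists>T. openin (top_of_set L) T \<and> ubar \<in> T \<and> T \<subseteq> P"
    unfolding interior_of_def L_def by simp
  then obtain T where T: "openin (top_of_set L) T" "ubar \<in> T" "T \<subseteq> P"
    by blast
  from T(1) obtain T' where T': "open T'" "T = L \<inter> T'" unfolding openin_open by blast
  have "ubar \<in> T'" using T(2) T'(2) by simp
  then obtain e where e: "e > 0" "ball ubar e \<subseteq> T'" using T'(1) open_contains_ball by blast
  have inP: "x \<in> P" if "x \<in> L" "dist ubar x < e" for x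
    using that e T T' by auto
  have nub: "norm ubar = 1" using assms(10) by auto
  obtain w where w: "Proj K ubar = {w}" using assms(12) unfolding K_def by blast
  have wK: "w \<in> K" using w unfolding Proj_def by auto
  have nw: "norm w = 1" using wK K_def by auto
  have compK: "compact K" unfolding K_def
    by (simp add: assms(5) compact_Int_closed compact_sphere closed_Int_compact)
  obtain x0 where x0: "x0 \<in> Q" "x0 \<noteq> 0" using assms(8) by blast
  have "(1 / norm x0) *\<^sub>R x0 \<in> K" unfolding K_def using x0 assms(7)
    by (auto simp: cone_def)
  hence Kne: "K \<noteq> {}" by blast
  have sqn: "(norm (y - ubar))^2 = 2 - 2 * inner ubar y" if "y \<in> K" for y
  proof -
    have "inner y y = 1" "inner ubar ubar = 1" using that nub unfolding K_def
      by (auto simp: dot_square_norm)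
    have "(norm (y - ubar))^2 = inner (y - ubar) (y - ubar)" by (rule power2_norm_eq_inner)
    also have "\<dots> = inner y y - 2 * inner ubar y + inner ubar ubar"
      by (simp add: inner_diff_left inner_diff_right inner_commute)
    finally show ?thesis using \<open>inner y y = 1\<close> \<open>inner ubar ubar = 1\<close> by simp
  qed
  have inProj: "v = w" if "v \<in> K" "\<forall>y\<in>K. inner ubar y \<le> inner ubar v" for v
  proof -
    have "v \<in> Proj K ubar" unfolding Proj_def
    proof (safe intro!: that(1))
      fix y assume "y \<in> K"
      have "inner ubar y \<le> inner ubar v" using that(2) \<open>y \<in> K\<close> by blast
      hence "(norm (v - ubar))^2 \<le> (norm (y - ubar))^2"
        unfolding sqn[OF that(1)] sqn[OF \<open>y \<in> K\<close>] by linarith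
      thus "norm (v - ubar) \<le> norm (y - ubar)"
        by (rule power2_le_imp_le) simp
    qed
    thus ?thesis using w by auto
  qed
  define s where "s = inner ubar w"
  obtain v0 where v0: "v0 \<in> K" "F_Q Q ubar = inner ubar v0" "\<forall>y\<in>K. inner ubar y \<le> inner ubar v0"
    using FQ_attained[OF compK Kne, of ubar] unfolding F_Q_def K_def by blast
  have "v0 = w" using inProj v0 by blast
  hence FQu: "F_Q Q ubar = s" and smax: "\<forall>y\<in>K. inner ubar y \<le> s" using v0 s_def by auto
  have sPQ: "s_PQ P Q = s" unfolding s_PQ_def
    using assms(10,11) FQu by (intro cInf_eq_minimum) auto
  have sabs: "\<bar>s\<bar> \<le> 1" unfolding s_def using Cauchy_Schwarz_ineq2[of ubar w] nub nw by simp
  define c where "c = min e 1 / 2"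
  have c: "c > 0" "c < e" "c < 1" using e(1) by (auto simp: c_def)
  define t where "t n = c * inverse (real (Suc n))" for n
  have t: "t n > 0" "t n \<le> c" for n
    using c by (auto simp: t_def field_simps)
  define u where "u n = ubar - t n *\<^sub>R w" for n
  have uL: "u n \<in> L" for n
    unfolding u_def L_def using assms(10) wK K_def
    by (intro span_diff span_scale span_base) auto
  have uP: "u n \<in> P" for n
    using inP[OF uL] t[of n] c nw by (simp add: u_def dist_norm)
  have nu_ge: "norm (u n) \<ge> 1 - t n" for n
    using norm_triangle_ineq2[of ubar "t n *\<^sub>R w"] nub nw t[of n] by (simp add: u_def)
  have nu_pos: "norm (u n) > 0" for n using nu_ge[of n] t[of n] c by linarith
  have nu_sq: "(norm (u n))^2 = 1 - 2 * t n * s + (t n)^2" for n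
  proof -
    have "inner ubar ubar = 1" "inner w w = 1" using nub nw by (auto simp: dot_square_norm)
    have "(norm (u n))^2 = inner (ubar - t n *\<^sub>R w) (ubar - t n *\<^sub>R w)"
      unfolding u_def by (rule power2_norm_eq_inner)
    also have "\<dots> = inner ubar ubar - 2 * t n * inner ubar w + (t n)^2 * inner w w"
      by (simp add: inner_diff_left inner_diff_right inner_commute power2_eq_square)
    finally show ?thesis using \<open>inner ubar ubar = 1\<close> \<open>inner w w = 1\<close> s_def by simp
  qed
  define p where "p n = (1 / norm (u n)) *\<^sub>R u n" for n
  have pPS: "p n \<in> P \<inter> sphere 0 1" for n
    using uP[of n] nu_pos[of n] assms(3) unfolding p_def by (auto simp: cone_def)
  have "\<forall>n. \<exists>v. v \<in> K \<and> F_Q Q (p n) = inner (p n) v"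
    using FQ_attained[OF compK Kne] unfolding F_Q_def K_def by blast
  then obtain v where v: "\<And>n. v n \<in> K" "\<And>n. F_Q Q (p n) = inner (p n) (v n)" by metis
  have key: "s * norm (u n) \<le> inner ubar (v n) - t n * inner w (v n)" for n
  proof -
    have "F_Q Q ubar \<le> F_Q Q (p n)" using assms(11) pPS[of n] by blast
    hence "s \<le> inner (p n) (v n)" using v(2)[of n] FQu by simp
    also have "\<dots> = inner (u n) (v n) / norm (u n)" by (simp add: p_def)
    finally have "s * norm (u n) \<le> inner (u n) (v n)" using nu_pos[of n] by (simp add: field_simps)
    thus ?thesis by (simp add: u_def inner_diff_left)
  qed
  have nv: "norm (v n) = 1" for n using v(1)[of n] K_def by auto
  have wv: "\<bar>inner w (v n)\<bar> \<le> 1" for n using Cauchy_Schwarz_ineq2[of w "v n"] nv nw by simp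
  have lb: "s * norm (u n) - t n \<le> inner ubar (v n)" for n
  proof -
    have "-1 \<le> inner w (v n)" using wv[of n] by linarith
    hence "t n * (-1) \<le> t n * inner w (v n)" using t[of n] by (intro mult_left_mono) auto
    thus ?thesis using key[of n] by linarith
  qed
  have ub: "inner w (v n) \<le> s * (2 * s - t n) / (1 + norm (u n))" for n
  proof -
    have "inner ubar (v n) \<le> s" using smax v(1) by auto
    hence "t n * inner w (v n) \<le> s * (1 - norm (u n))" using key[of n] by (simp add: algebra_simps)
    also have "s * (1 - norm (u n)) = s * (1 - (norm (u n))^2) / (1 + norm (u n))"
    proof -
      have "1 + norm (u n) \<noteq> 0" using norm_ge_zero[of "u n"] by linarith
      thus ?thesis by (subst eq_divide_eq) (auto simp: algebra_simps power2_eq_square)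
    qed
    also have "\<dots> = t n * (s * (2 * s - t n) / (1 + norm (u n)))"
    proof -
      have "1 - (norm (u n))^2 = t n * (2 * s - t n)" using nu_sq[of n] by (simp add: algebra_simps power2_eq_square)
      thus ?thesis by simp
    qed
    finally have "t n * inner w (v n) \<le> t n * (s * (2 * s - t n) / (1 + norm (u n)))" .
    thus ?thesis using t(1)[of n] by (rule mult_left_le_imp_le)
  qed
  have t0: "t \<longlonglongrightarrow> 0" unfolding t_def
    using tendsto_mult[OF tendsto_const LIMSEQ_inverse_real_of_nat, of c] by simp
  have nu1: "(\<lambda>n. norm (u n)) \<longlonglongrightarrow> 1"
  proof -
    have "(\<lambda>n. ubar - t n *\<^sub>R w) \<longlonglongrightarrow> ubar - 0 *\<^sub>R w"
      by (intro tendsto_intros t0)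
    hence "(\<lambda>n. norm (u n)) \<longlonglongrightarrow> norm ubar" unfolding u_def by (intro tendsto_norm) simp
    thus ?thesis using nub by simp
  qed
  have "seq_compact K" using compK compact_imp_seq_compact by blast
  then obtain vs r where vs: "vs \<in> K" "strict_mono r" "(v \<circ> r) \<longlonglongrightarrow> vs"
    unfolding seq_compact_def using v(1) by metis
  have "s * 1 - 0 \<le> inner ubar vs"
  proof (rule LIMSEQ_le[of "\<lambda>n. s * norm (u (r n)) - t (r n)" _ "\<lambda>n. inner ubar ((v \<circ> r) n)"])
    show "(\<lambda>n. s * norm (u (r n)) - t (r n)) \<longlonglongrightarrow> s * 1 - 0"
      by (intro tendsto_intros LIMSEQ_subseq_LIMSEQ[OF nu1 vs(2), unfolded o_def] LIMSEQ_subseq_LIMSEQ[OF t0 vs(2), unfolded o_def])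
    show "(\<lambda>n. inner ubar ((v \<circ> r) n)) \<longlonglongrightarrow> inner ubar vs"
      by (intro tendsto_intros vs(3))
    show "\<exists>N. \<forall>n\<ge>N. s * norm (u (r n)) - t (r n) \<le> inner ubar ((v \<circ> r) n)"
      using lb by auto
  qed
  hence "vs = w" using inProj[OF vs(1)] smax by force
  have "inner w w \<le> s * (2 * s - 0) / (1 + 1)"
  proof (rule LIMSEQ_le[of "\<lambda>n. inner w ((v \<circ> r) n)" _ "\<lambda>n. s * (2 * s - t (r n)) / (1 + norm (u (r n)))"])
    show "(\<lambda>n. inner w ((v \<circ> r) n)) \<longlonglongrightarrow> inner w w"
      using vs(3) \<open>vs = w\<close> by (intro tendsto_intros) (auto simp: o_def)
    show "(\<lambda>n. s * (2 * s - t (r n)) / (1 + norm (u (r n)))) \<longlonglongrightarrow> s * (2 * s - 0) / (1 + 1)"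
      by (intro tendsto_intros LIMSEQ_subseq_LIMSEQ[OF nu1 vs(2), unfolded o_def] LIMSEQ_subseq_LIMSEQ[OF t0 vs(2), unfolded o_def]) simp
    show "\<exists>N. \<forall>n\<ge>N. inner w ((v \<circ> r) n) \<le> s * (2 * s - t (r n)) / (1 + norm (u (r n)))"
      using ub by auto
  qed
  moreover have "inner w w = 1" using nw by (simp add: dot_square_norm)
  ultimately have "1 \<le> s * s" by simp
  moreover have "\<bar>s\<bar> * \<bar>s\<bar> \<le> \<bar>s\<bar> * 1" using sabs by (intro mult_left_mono) auto
  moreover have "\<bar>s\<bar> * \<bar>s\<bar> = s * s" by (rule abs_mult_self_eq)
  ultimately have "\<bar>s\<bar> = 1" using sabs by linarith
  thus False using assms(9) sPQ by simp
qed

end
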